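(* Let $n\ge1$. As polynomials in the indeterminates $x$ and $y$ with coefficients in $\mathbb{Q}[\mathfrak{B}_n]$, \[\rho_B(x)\rho_B(y)=\rho_B(xy),\qquad\text{where }\rho_B(x)=\sum_{\pi\in\mathfrak{B}_n}\Omega'_B(\pi;(x-1)/4)\,\pi.\]
   Context: $\mathfrak{B}_n$ is the hyperoctahedral group of signed permutations: bijections $\pi$ of $\{-n,\dots,-1,0,1,\dots,n\}$ with $\pi(-i)=-\pi(i)$, written as words $(\pi(1),\dots,\pi(n))$, with $\pi(0)=0$; multiplication in $\mathbb{Q}[\mathfrak{B}_n]$ is composition. For an integer $k\ge0$ let $Z_k$ be the totally ordered set $0<\bar1<1<\bar2<2<\dots<\bar k<k$, where $0$ and unbarred $j$ are "plus-type" and barred $\bar j$ are "minus-type". The type B enriched order polynomial $\Omega'_B(\pi;k)$ is the number of sequences $(a_1,\dots,a_n)\in Z_k^n$ such that, setting $a_0=0$, we have $a_0\le a_1\le\dots\le a_n$ and for every $s\in\{0,1,\dots,n-1\}$: if $\pi(s)<\pi(s+1)$ then $a_s<a_{s+1}$ or ($a_s=a_{s+1}$ is plus-type); if $\pi(s)>\pi(s+1)$ then $a_s<a_{s+1}$ or ($a_s=a_{s+1}$ is minus-type). As a function of $k$ this is the restriction of a unique polynomial with rational coefficients, denoted by the same symbol. *)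

theory Defs
  imports "HOL-Combinatorics.Permutations" "HOL-Computational_Algebra.Polynomial" "HOL-Library.FuncSet"
begin

definition signed_perms :: "nat \<Rightarrow> (int \<Rightarrow> int) set" where
  "signed_perms n = {\<pi>. \<pi> permutes {- int n .. int n} \<and> (\<forall>i. \<pi> (- i) = - \<pi> i)}"

text \<open>Encoding of Z_k = 0 < 1bar < 1 < 2bar < 2 < ... < kbar < k as {0..2k}:
  0 is 0, jbar is 2j-1, j is 2j.  Plus-type = even code, minus-type = odd code.\<close>
definition Zk :: "nat \<Rightarrow> nat set" where
  "Zk k = {0 .. 2 * k}"

definition plus_type :: "nat \<Rightarrow> bool" where
  "plus_type z \<longleftrightarrow> even z"

definition minus_type :: "nat \<Rightarrow> bool" where
  "minus_type z \<longleftrightarrow> odd z"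

definition enriched_seqs :: "nat \<Rightarrow> (int \<Rightarrow> int) \<Rightarrow> nat \<Rightarrow> (nat \<Rightarrow> nat) set" where
  "enriched_seqs n \<pi> k = {a. a \<in> {0..n} \<rightarrow>\<^sub>E Zk k \<and> a 0 = 0 \<and>
     (\<forall>s<n. a s \<le> a (Suc s) \<and>
        (\<pi> (int s) < \<pi> (int (Suc s)) \<longrightarrow> a s < a (Suc s) \<or> (a s = a (Suc s) \<and> plus_type (a s))) \<and>
        (\<pi> (int s) > \<pi> (int (Suc s)) \<longrightarrow> a s < a (Suc s) \<or> (a s = a (Suc s) \<and> minus_type (a s))))}"

definition omegaB :: "nat \<Rightarrow> (int \<Rightarrow> int) \<Rightarrow> nat \<Rightarrow> nat" where
  "omegaB n \<pi> k = card (enriched_seqs n \<pi> k)"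

definition omegaB_poly :: "nat \<Rightarrow> (int \<Rightarrow> int) \<Rightarrow> rat poly" where
  "omegaB_poly n \<pi> = (THE p. \<forall>k. poly p (of_nat k) = of_nat (omegaB n \<pi> k))"

text \<open>Group algebra Q[B_n]: coefficient functions supported on signed_perms n.\<close>
definition ga_mult :: "nat \<Rightarrow> ((int \<Rightarrow> int) \<Rightarrow> rat) \<Rightarrow> ((int \<Rightarrow> int) \<Rightarrow> rat) \<Rightarrow> ((int \<Rightarrow> int) \<Rightarrow> rat)" where
  "ga_mult n f g = (\<lambda>\<sigma>. \<Sum>\<pi>\<in>signed_perms n. \<Sum>\<tau>\<in>signed_perms n.
       if \<pi> \<circ> \<tau> = \<sigma> then f \<pi> * g \<tau> else 0)"

definition rhoB :: "nat \<Rightarrow> rat \<Rightarrow> ((int \<Rightarrow> int) \<Rightarrow> rat)" where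
  "rhoB n x = (\<lambda>\<pi>. if \<pi> \<in> signed_perms n then poly (omegaB_poly n \<pi>) ((x - 1) / 4) else 0)"

end

theory Submission
  imports Defs
begin


definition polyfun :: "(nat \<Rightarrow> rat) \<Rightarrow> bool" where
  "polyfun f \<longleftrightarrow> (\<exists>p::rat poly. \<forall>k. poly p (of_nat k) = f k)"

lemma polyfun_const: "polyfun (\<lambda>k. c)"
  unfolding polyfun_def by (rule exI[of _ "[:c:]"]) simp

lemma polyfun_id_pow: "polyfun (\<lambda>k. of_nat k ^ i)"
  unfolding polyfun_def by (rule exI[of _ "monom 1 i"]) (simp add: poly_monom)

lemma polyfun_add: "polyfun f \<Longrightarrow> polyfun g \<Longrightarrow> polyfun (\<lambda>k. f k + g k)"
  unfolding polyfun_def by (metis poly_add)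

lemma polyfun_diff: "polyfun f \<Longrightarrow> polyfun g \<Longrightarrow> polyfun (\<lambda>k. f k - g k)"
  unfolding polyfun_def by (metis poly_diff)

lemma polyfun_mult: "polyfun f \<Longrightarrow> polyfun g \<Longrightarrow> polyfun (\<lambda>k. f k * g k)"
  unfolding polyfun_def by (metis poly_mult)

lemma polyfun_cmult: "polyfun f \<Longrightarrow> polyfun (\<lambda>k. c * f k)"
  using polyfun_mult[OF polyfun_const] by blast

lemma polyfun_sum: "finite A \<Longrightarrow> (\<And>a. a \<in> A \<Longrightarrow> polyfun (f a)) \<Longrightarrow> polyfun (\<lambda>k. \<Sum>a\<in>A. f a k)"
proof (induction A rule: finite_induct)
  case empty then show ?case using polyfun_const[of 0] by simp
next
  case (insert x F)
  then show ?case by (simp add: polyfun_add)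
qed

lemma polyfun_cong: "polyfun f \<Longrightarrow> (\<And>k. f k = g k) \<Longrightarrow> polyfun g"
  unfolding polyfun_def by metis

lemma powsum_polyfun: "polyfun (\<lambda>k. \<Sum>t<k. (of_nat t :: rat) ^ i)"
proof (induction i rule: less_induct)
  case (less i)
  define S where "S j k = (\<Sum>t<k. (of_nat t :: rat) ^ j)" for j k
  have tele: "(of_nat k :: rat) ^ Suc i = (\<Sum>j\<le>i. of_nat (Suc i choose j) * S j k)" for k
  proof -
    have "(of_nat k :: rat) ^ Suc i = (\<Sum>t<k. (of_nat (Suc t)) ^ Suc i - (of_nat t :: rat) ^ Suc i)"
      by (subst sum_lessThan_telescope) simp
    also have "\<dots> = (\<Sum>t<k. \<Sum>j\<le>i. of_nat (Suc i choose j) * (of_nat t :: rat) ^ j)"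
    proof (rule sum.cong[OF refl])
      fix t
      have "(of_nat (Suc t) :: rat) ^ Suc i = (of_nat t + 1) ^ Suc i" by (simp add: add.commute)
      also have "\<dots> = (\<Sum>j\<le>Suc i. of_nat (Suc i choose j) * (of_nat t) ^ j * 1 ^ (Suc i - j))"
        by (rule binomial_ring)
      also have "\<dots> = (\<Sum>j\<le>i. of_nat (Suc i choose j) * (of_nat t :: rat) ^ j) + of_nat t ^ Suc i"
        by (simp add: atMost_Suc)
      finally show "(of_nat (Suc t) :: rat) ^ Suc i - (of_nat t) ^ Suc i = (\<Sum>j\<le>i. of_nat (Suc i choose j) * (of_nat t :: rat) ^ j)"
        by simp
    qed
    also have "\<dots> = (\<Sum>j\<le>i. of_nat (Suc i choose j) * S j k)"
      unfolding S_def by (subst sum.swap) (simp add: sum_distrib_left)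
    finally show ?thesis .
  qed
  have eq: "S i k = (of_nat k ^ Suc i - (\<Sum>j<i. of_nat (Suc i choose j) * S j k)) / of_nat (Suc i)" for k
  proof -
    have "(\<Sum>j\<le>i. of_nat (Suc i choose j) * S j k) = (\<Sum>j<i. of_nat (Suc i choose j) * S j k) + of_nat (Suc i) * S i k"
      by (simp add: lessThan_Suc_atMost[symmetric])
    with tele[of k] show ?thesis by (simp add: field_simps)
  qed
  have "polyfun (\<lambda>k. (of_nat k ^ Suc i - (\<Sum>j<i. of_nat (Suc i choose j) * S j k)) / of_nat (Suc i))"
  proof -
    have "polyfun (\<lambda>k. \<Sum>j<i. of_nat (Suc i choose j) * S j k)"
      by (rule polyfun_sum) (auto intro!: polyfun_cmult less.IH simp: S_def)
    then have "polyfun (\<lambda>k. of_nat k ^ Suc i - (\<Sum>j<i. of_nat (Suc i choose j) * S j k))"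
      by (intro polyfun_diff polyfun_id_pow)
    from polyfun_cmult[OF this, of "1 / of_nat (Suc i)"] show ?thesis by simp
  qed
  then show ?case by (rule polyfun_cong) (metis eq S_def)
qed

lemma polyfun_antider: assumes "polyfun f" shows "polyfun (\<lambda>k. \<Sum>t<k. f t)"
proof -
  obtain p where p: "\<And>k. poly p (of_nat k) = f k" using assms unfolding polyfun_def by blast
  have eq: "(\<Sum>t<k. f t) = (\<Sum>i\<le>degree p. coeff p i * (\<Sum>t<k. (of_nat t :: rat) ^ i))" for k
    by (simp add: p[symmetric] poly_altdef sum_distrib_left) (subst sum.swap, simp)
  have pf: "polyfun (\<lambda>k. \<Sum>i\<le>degree p. coeff p i * (\<Sum>t<k. (of_nat t :: rat) ^ i))"
    by (rule polyfun_sum) (auto intro!: polyfun_cmult powsum_polyfun)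
  show ?thesis by (rule polyfun_cong[OF pf]) (simp add: eq)
qed

lemma polyfun_from_diff:
  assumes "polyfun (\<lambda>k. f (Suc k) - f k)" shows "polyfun f"
proof -
  have eq: "f k = f 0 + (\<Sum>t<k. f (Suc t) - f t)" for k
    by (subst sum_lessThan_telescope) simp
  show ?thesis by (rule polyfun_cong[OF polyfun_add[OF polyfun_const[of "f 0"] polyfun_antider[OF assms]]]) (simp only: eq[symmetric])
qed

lemma poly_eq_on_nat:
  fixes p q :: "rat poly"
  assumes "\<And>k. poly p (of_nat k) = poly q (of_nat k)" shows "p = q"
proof (rule ccontr)
  assume "p \<noteq> q"
  then have "finite {x. poly (p - q) x = 0}" using poly_roots_finite[of "p - q"] by auto
  moreover have "range (of_nat :: nat \<Rightarrow> rat) \<subseteq> {x. poly (p - q) x = 0}" using assms by auto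
  moreover have "infinite (range (of_nat :: nat \<Rightarrow> rat))"
    using range_inj_infinite[of "of_nat :: nat \<Rightarrow> rat"] by (simp add: inj_on_def)
  ultimately show False using finite_subset by blast
qed



definition stepc :: "(int \<Rightarrow> int) \<Rightarrow> nat \<Rightarrow> nat \<Rightarrow> nat \<Rightarrow> bool" where
  "stepc \<sigma> s x y \<longleftrightarrow> x \<le> y \<and>
        (\<sigma> (int s) < \<sigma> (int (Suc s)) \<longrightarrow> x < y \<or> (x = y \<and> even x)) \<and>
        (\<sigma> (int s) > \<sigma> (int (Suc s)) \<longrightarrow> x < y \<or> (x = y \<and> odd x))"

definition Sq :: "(int \<Rightarrow> int) \<Rightarrow> nat \<Rightarrow> nat \<Rightarrow> (nat \<Rightarrow> nat) set" where
  "Sq \<sigma> m w = {a \<in> {0..m} \<rightarrow>\<^sub>E {0..w}. a 0 = 0 \<and> (\<forall>s<m. stepc \<sigma> s (a s) (a (Suc s)))}"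

lemma enriched_Sq: "enriched_seqs n \<sigma> k = Sq \<sigma> n (2*k)"
  unfolding enriched_seqs_def Sq_def stepc_def Zk_def plus_type_def minus_type_def by auto

lemma finite_Sq: "finite (Sq \<sigma> m w)"
proof -
  have "finite ({0..m} \<rightarrow>\<^sub>E {0..w})" by (intro finite_PiE) auto
  then show ?thesis unfolding Sq_def by (rule finite_subset[rotated]) auto
qed

lemma Sq_mono: assumes "a \<in> Sq \<sigma> m w" "i \<le> j" "j \<le> m" shows "a i \<le> a j"
  using assms(2,3)
proof (induction j)
  case 0 then show ?case by simp
next
  case (Suc j)
  show ?case
  proof (cases "i = Suc j")
    case False
    then have "a i \<le> a j" using Suc by simp
    moreover have "a j \<le> a (Suc j)" using assms(1) Suc.prems unfolding Sq_def stepc_def by auto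
    ultimately show ?thesis by simp
  qed simp
qed

definition allowed :: "(int \<Rightarrow> int) \<Rightarrow> nat \<Rightarrow> nat \<Rightarrow> nat \<Rightarrow> bool" where
  "allowed \<sigma> s m v \<longleftrightarrow> (\<forall>i. s < i \<and> i < m \<longrightarrow>
      (\<sigma> (int i) < \<sigma> (int (Suc i)) \<longrightarrow> even v) \<and> (\<sigma> (int i) > \<sigma> (int (Suc i)) \<longrightarrow> odd v))"

definition extq :: "nat \<Rightarrow> nat \<Rightarrow> nat \<Rightarrow> (nat \<Rightarrow> nat) \<Rightarrow> nat \<Rightarrow> nat" where
  "extq m s w b = (\<lambda>i. if i \<le> s then b i else if i \<le> m then Suc w else undefined)"

lemma Sq_decomp:
  "Sq \<sigma> m (Suc w) = (\<Union>s\<in>{s. s \<le> m \<and> allowed \<sigma> s m (Suc w)}. extq m s w ` Sq \<sigma> s w)"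
proof (intro equalityI subsetI)
  fix a assume a: "a \<in> Sq \<sigma> m (Suc w)"
  define s where "s = Max {i. i \<le> m \<and> a i \<le> w}"
  have fin: "finite {i. i \<le> m \<and> a i \<le> w}" by simp
  have a0: "a 0 = 0" using a unfolding Sq_def by auto
  then have ne: "0 \<in> {i. i \<le> m \<and> a i \<le> w}" by simp
  have "s \<in> {i. i \<le> m \<and> a i \<le> w}" using Max_in[OF fin] ne unfolding s_def by blast
  then have sm: "s \<le> m" and asw: "a s \<le> w" by auto
  have big: "a i = Suc w" if "s < i" "i \<le> m" for i
  proof -
    have "i \<notin> {i. i \<le> m \<and> a i \<le> w}"
    proof
      assume "i \<in> {i. i \<le> m \<and> a i \<le> w}"
      then have "i \<le> s" using Max_ge[OF fin] unfolding s_def by blast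
      then show False using that by simp
    qed
    moreover have "a i \<le> Suc w" using a that unfolding Sq_def by auto
    ultimately show ?thesis using that by auto
  qed
  define b where "b = restrict a {0..s}"
  have "b \<in> Sq \<sigma> s w"
    unfolding Sq_def b_def
  proof (intro CollectI conjI allI impI)
    have "\<forall>i\<le>s. a i \<le> w" using Sq_mono[OF a _ sm] asw le_trans by blast
    then show "restrict a {0..s} \<in> {0..s} \<rightarrow>\<^sub>E {0..w}" by auto
    show "restrict a {0..s} 0 = 0" using a0 by simp
    fix t assume "t < s"
    then show "stepc \<sigma> t (restrict a {0..s} t) (restrict a {0..s} (Suc t))"
      using a sm unfolding Sq_def by auto
  qed
  moreover have "allowed \<sigma> s m (Suc w)"
    unfolding allowed_def
  proof (intro allI impI)
    fix i assume i: "s < i \<and> i < m"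
    then have "a i = Suc w" "a (Suc i) = Suc w" using big by auto
    moreover have "stepc \<sigma> i (a i) (a (Suc i))" using a i unfolding Sq_def by auto
    ultimately show "(\<sigma> (int i) < \<sigma> (int (Suc i)) \<longrightarrow> even (Suc w)) \<and> (\<sigma> (int i) > \<sigma> (int (Suc i)) \<longrightarrow> odd (Suc w))"
      unfolding stepc_def by auto
  qed
  moreover have "a = extq m s w b"
  proof
    fix i show "a i = extq m s w b i"
      using big[of i] a unfolding extq_def b_def Sq_def by (auto simp: PiE_def extensional_def)
  qed
  ultimately show "a \<in> (\<Union>s\<in>{s. s \<le> m \<and> allowed \<sigma> s m (Suc w)}. extq m s w ` Sq \<sigma> s w)"
    using sm by blast
next
  fix a assume "a \<in> (\<Union>s\<in>{s. s \<le> m \<and> allowed \<sigma> s m (Suc w)}. extq m s w ` Sq \<sigma> s w)"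
  then obtain s b where sm: "s \<le> m" and al: "allowed \<sigma> s m (Suc w)" and b: "b \<in> Sq \<sigma> s w"
    and ab: "a = extq m s w b" by blast
  have bw: "b i \<le> w" if "i \<le> s" for i using b that unfolding Sq_def by auto
  show "a \<in> Sq \<sigma> m (Suc w)"
    unfolding Sq_def
  proof (intro CollectI conjI allI impI)
    show "a \<in> {0..m} \<rightarrow>\<^sub>E {0..Suc w}"
      using bw sm unfolding ab extq_def by (auto simp: PiE_def extensional_def le_SucI)
    show "a 0 = 0" using b unfolding ab extq_def Sq_def by auto
    fix t assume t: "t < m"
    consider "t < s" | "t = s" | "s < t" by linarith
    then show "stepc \<sigma> t (a t) (a (Suc t))"
    proof cases
      case 1 then show ?thesis using b unfolding ab extq_def Sq_def by auto
    next
      case 2 then show ?thesis using bw[of s] t unfolding ab extq_def stepc_def by auto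
    next
      case 3 then show ?thesis using al t unfolding ab extq_def stepc_def allowed_def by auto
    qed
  qed
qed

lemma card_Sq_rec:
  "card (Sq \<sigma> m (Suc w)) = (\<Sum>s\<le>m. if allowed \<sigma> s m (Suc w) then card (Sq \<sigma> s w) else 0)"
proof -
  have inj: "inj_on (extq m s w) (Sq \<sigma> s w)" if "s \<le> m" for s
  proof
    fix b1 b2 assume b: "b1 \<in> Sq \<sigma> s w" "b2 \<in> Sq \<sigma> s w" and e: "extq m s w b1 = extq m s w b2"
    show "b1 = b2"
    proof
      fix i show "b1 i = b2 i"
      proof (cases "i \<le> s")
        case True then show ?thesis using fun_cong[OF e, of i] unfolding extq_def by auto
      next
        case False then show ?thesis using b unfolding Sq_def by (auto simp: PiE_def extensional_def)
      qed
    qed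
  qed
  have disj: "extq m s1 w ` Sq \<sigma> s1 w \<inter> extq m s2 w ` Sq \<sigma> s2 w = {}"
    if "s1 \<le> m" "s2 \<le> m" "s1 \<noteq> s2" for s1 s2
  proof -
    have "extq m s1 w b1 \<noteq> extq m s2 w b2" if "s1 < s2" "s2 \<le> m" "b2 \<in> Sq \<sigma> s2 w" for s1 s2 b1 b2
    proof -
      have "b2 s2 \<le> w" using that unfolding Sq_def by auto
      then have "extq m s1 w b1 s2 \<noteq> extq m s2 w b2 s2" using that unfolding extq_def by auto
      then show ?thesis by metis
    qed
    then show ?thesis using that by (cases "s1 < s2") (auto, metis linorder_neqE_nat)
  qed
  have "card (Sq \<sigma> m (Suc w)) = (\<Sum>s\<in>{s. s \<le> m \<and> allowed \<sigma> s m (Suc w)}. card (extq m s w ` Sq \<sigma> s w))"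
    unfolding Sq_decomp[of \<sigma> m w]
    by (rule card_UN_disjoint) (auto simp: finite_Sq disj)
  also have "\<dots> = (\<Sum>s\<in>{s. s \<le> m \<and> allowed \<sigma> s m (Suc w)}. card (Sq \<sigma> s w))"
    by (rule sum.cong) (auto simp: card_image inj)
  also have "\<dots> = (\<Sum>s\<le>m. if allowed \<sigma> s m (Suc w) then card (Sq \<sigma> s w) else 0)"
    by (subst sum.inter_filter[symmetric]) (auto intro: sum.cong)
  finally show ?thesis .
qed

lemma allowed_parity: "allowed \<sigma> s m v = allowed \<sigma> s m (v mod 2)"
  unfolding allowed_def by simp

lemma allowed_refl: "allowed \<sigma> m m v" unfolding allowed_def by auto

lemma polyfun_if: "polyfun f \<Longrightarrow> polyfun (\<lambda>k. if P then f k else 0)"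
  by (cases P) (auto simp: polyfun_const)

lemma Sq_polyfun:
  "polyfun (\<lambda>k. of_nat (card (Sq \<sigma> m (2*k)))) \<and> polyfun (\<lambda>k. of_nat (card (Sq \<sigma> m (Suc (2*k)))))"
proof (induction m rule: less_induct)
  case (less m)
  define e where "e s k = (of_nat (card (Sq \<sigma> s (2*k))) :: rat)" for s k
  define od where "od s k = (of_nat (card (Sq \<sigma> s (Suc (2*k)))) :: rat)" for s k
  have ro: "od m k = e m k + (\<Sum>s<m. if allowed \<sigma> s m 1 then e s k else 0)" for k
  proof -
    have "od m k = (\<Sum>s\<le>m. if allowed \<sigma> s m 1 then e s k else 0)"
      unfolding od_def e_def card_Sq_rec of_nat_sum
      by (rule sum.cong[OF refl]) (subst allowed_parity, simp)
    then show ?thesis by (simp add: lessThan_Suc_atMost[symmetric] allowed_refl)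
  qed
  have re: "e m (Suc k) = od m k + (\<Sum>s<m. if allowed \<sigma> s m 0 then od s k else 0)" for k
  proof -
    have "e m (Suc k) = (\<Sum>s\<le>m. if allowed \<sigma> s m 0 then od s k else 0)"
      unfolding od_def e_def
      by (simp add: card_Sq_rec of_nat_sum, rule sum.cong[OF refl], subst allowed_parity, simp)
    then show ?thesis by (simp add: lessThan_Suc_atMost[symmetric] allowed_refl)
  qed
  have pe: "polyfun (e s)" "polyfun (od s)" if "s < m" for s
    using less.IH[OF that] unfolding e_def od_def by auto
  have p1: "polyfun (\<lambda>k. \<Sum>s<m. if allowed \<sigma> s m 1 then e s k else 0)"
    by (rule polyfun_sum) (auto intro: pe polyfun_const polyfun_if)
  have p0: "polyfun (\<lambda>k. \<Sum>s<m. if allowed \<sigma> s m 0 then od s k else 0)"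
    by (rule polyfun_sum) (auto intro: pe polyfun_const polyfun_if)
  have "polyfun (e m)"
  proof (rule polyfun_from_diff)
    have eq: "e m (Suc k) - e m k = (\<Sum>s<m. if allowed \<sigma> s m 1 then e s k else 0) + (\<Sum>s<m. if allowed \<sigma> s m 0 then od s k else 0)" for k
      using re[of k] ro[of k] by simp
    show "polyfun (\<lambda>k. e m (Suc k) - e m k)"
      by (rule polyfun_cong[OF polyfun_add[OF p1 p0]]) (simp only: eq)
  qed
  moreover have "polyfun (od m)"
    by (rule polyfun_cong[OF polyfun_add[OF \<open>polyfun (e m)\<close> p1]]) (simp add: ro)
  ultimately show ?case unfolding e_def od_def by simp
qed

lemma omegaB_poly_eval: "poly (omegaB_poly n \<pi>) (of_nat k) = of_nat (omegaB n \<pi> k)"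
proof -
  obtain p :: "rat poly" where p: "\<And>k. poly p (of_nat k) = of_nat (card (Sq \<pi> n (2*k)))"
    using Sq_polyfun[of \<pi> n] unfolding polyfun_def by blast
  have pk: "\<forall>k. poly p (of_nat k) = of_nat (omegaB n \<pi> k)"
    using p by (simp add: omegaB_def enriched_Sq)
  have "omegaB_poly n \<pi> = p"
    unfolding omegaB_poly_def
  proof (rule the_equality)
    show "\<forall>k. poly p (of_nat k) = of_nat (omegaB n \<pi> k)" by (rule pk)
  next
    fix q :: "rat poly" assume "\<forall>k. poly q (of_nat k) = of_nat (omegaB n \<pi> k)"
    then show "q = p" using pk by (intro poly_eq_on_nat) simp
  qed
  then show ?thesis using pk by simp
qed



abbreviation Iv :: "nat \<Rightarrow> int set" where "Iv n \<equiv> {- int n .. int n}"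

lemma sp_permutes: "\<sigma> \<in> signed_perms n \<Longrightarrow> \<sigma> permutes Iv n"
  unfolding signed_perms_def by simp

lemma sp_odd: "\<sigma> \<in> signed_perms n \<Longrightarrow> \<sigma> (- i) = - \<sigma> i"
  unfolding signed_perms_def by simp

lemma sp_zero: "\<sigma> \<in> signed_perms n \<Longrightarrow> \<sigma> 0 = 0"
  using sp_odd[of \<sigma> n 0] by simp

lemma sp_in_iff: "\<sigma> \<in> signed_perms n \<Longrightarrow> (\<sigma> p \<in> Iv n) = (p \<in> Iv n)"
  by (rule permutes_in_image[OF sp_permutes])

lemma sp_in: assumes "\<sigma> \<in> signed_perms n" "p \<in> Iv n" shows "\<sigma> p \<in> Iv n"
  using assms(2) unfolding sp_in_iff[OF assms(1)] .


lemma sp_out: "\<sigma> \<in> signed_perms n \<Longrightarrow> p \<notin> Iv n \<Longrightarrow> \<sigma> p = p"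
  by (rule permutes_not_in[OF sp_permutes])

lemma sp_inj: "\<sigma> \<in> signed_perms n \<Longrightarrow> \<sigma> p = \<sigma> q \<Longrightarrow> p = q"
  by (rule injD[OF permutes_inj[OF sp_permutes]])

lemma sp_comp: "\<pi> \<in> signed_perms n \<Longrightarrow> \<tau> \<in> signed_perms n \<Longrightarrow> \<pi> \<circ> \<tau> \<in> signed_perms n"
  unfolding signed_perms_def by (simp add: permutes_compose)

lemma sp_inv: assumes "\<pi> \<in> signed_perms n" shows "inv \<pi> \<in> signed_perms n"
proof -
  have pp: "\<pi> permutes Iv n" using assms by (rule sp_permutes)
  have "inv \<pi> (- i) = - inv \<pi> i" for i
  proof -
    have "\<pi> (- inv \<pi> i) = - i" using sp_odd[OF assms, of "inv \<pi> i"] permutes_inverses(1)[OF pp] by simp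
    then show ?thesis using permutes_inverses(2)[OF pp] by metis
  qed
  then show ?thesis using permutes_inv[OF pp] unfolding signed_perms_def by simp
qed

lemma sp_inv_app: "\<pi> \<in> signed_perms n \<Longrightarrow> \<pi> (inv \<pi> v) = v"
  by (rule permutes_inverses(1)[OF sp_permutes])

lemma sp_app_inv: "\<pi> \<in> signed_perms n \<Longrightarrow> inv \<pi> (\<pi> v) = v"
  by (rule permutes_inverses(2)[OF sp_permutes])

lemma finite_sp: "finite (signed_perms n)"
proof -
  have "signed_perms n \<subseteq> {p. p permutes Iv n}" unfolding signed_perms_def by auto
  then show ?thesis using finite_permutations[of "Iv n"] finite_subset by auto
qed

definition Kf :: "nat \<Rightarrow> (int \<Rightarrow> int) \<Rightarrow> int \<Rightarrow> int" where
  "Kf n g v = g v * (2 * int n + 1) + (if even (g v) then v else - v)"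

definition compat :: "nat \<Rightarrow> (int \<Rightarrow> int) \<Rightarrow> (int \<Rightarrow> int) \<Rightarrow> bool" where
  "compat n \<pi> g \<longleftrightarrow> (\<forall>p\<in>Iv n. \<forall>q\<in>Iv n. p < q \<longrightarrow> Kf n g (\<pi> p) < Kf n g (\<pi> q))"

definition OF :: "nat \<Rightarrow> nat \<Rightarrow> (int \<Rightarrow> int) set" where
  "OF n k = {g \<in> Iv n \<rightarrow>\<^sub>E {- (2 * int k) .. 2 * int k}. \<forall>v\<in>Iv n. g (- v) = - g v}"

definition lexc :: "int \<Rightarrow> int \<Rightarrow> int \<Rightarrow> int \<Rightarrow> bool" where
  "lexc x u y v \<longleftrightarrow> x < y \<or> (x = y \<and> (if even x then u < v else v < u))"

lemma lex_key:
  fixes x y u v :: int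
  assumes "\<bar>u\<bar> \<le> int n" "\<bar>v\<bar> \<le> int n"
  shows "(x * (2 * int n + 1) + (if even x then u else - u) < y * (2 * int n + 1) + (if even y then v else - v))
     \<longleftrightarrow> lexc x u y v"
proof -
  define N where "N = 2 * int n + 1"
  define e1 where "e1 = (if even x then u else - u)"
  define e2 where "e2 = (if even y then v else - v)"
  have N: "N = 2 * int n + 1" "N > 0" unfolding N_def by auto
  have a: "e1 \<le> int n" "- int n \<le> e1" "e2 \<le> int n" "- int n \<le> e2"
    using assms unfolding e1_def e2_def by auto
  have "(x * N + e1 < y * N + e2) \<longleftrightarrow> lexc x u y v"
  proof (cases x y rule: linorder_cases)
    case less
    then have "(x + 1) * N \<le> y * N" using N by (intro mult_right_mono) auto
    then have "x * N + N \<le> y * N" by (simp add: distrib_right)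
    then have "x * N + e1 < y * N + e2" using a N by linarith
    moreover have "lexc x u y v" using less unfolding lexc_def by simp
    ultimately show ?thesis by simp
  next
    case greater
    then have "(y + 1) * N \<le> x * N" using N by (intro mult_right_mono) auto
    then have "y * N + N \<le> x * N" by (simp add: distrib_right)
    then have "\<not> x * N + e1 < y * N + e2" using a N by linarith
    moreover have "\<not> lexc x u y v" using greater unfolding lexc_def by simp
    ultimately show ?thesis by simp
  next
    case equal
    then show ?thesis unfolding lexc_def e1_def e2_def by (cases "even y") simp_all
  qed
  then show ?thesis unfolding N_def e1_def e2_def .
qed

lemma OF_range: "g \<in> OF n k \<Longrightarrow> v \<in> Iv n \<Longrightarrow> \<bar>g v\<bar> \<le> 2 * int k"
proof -
  assume "g \<in> OF n k" "v \<in> Iv n"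
  then have "g v \<in> {- (2 * int k) .. 2 * int k}" unfolding OF_def by (simp add: PiE_iff)
  then show ?thesis by (auto simp: abs_le_iff)
qed

lemma OF_odd: "g \<in> OF n k \<Longrightarrow> v \<in> Iv n \<Longrightarrow> g (- v) = - g v"
  unfolding OF_def by auto

lemma OF_zero: "g \<in> OF n k \<Longrightarrow> g 0 = 0"
  using OF_odd[of g n k 0] by simp

lemma OF_out: "g \<in> OF n k \<Longrightarrow> v \<notin> Iv n \<Longrightarrow> g v = undefined"
  unfolding OF_def by (auto simp: PiE_def extensional_def)

lemma finite_OF: "finite (OF n k)"
proof -
  have "finite (Iv n \<rightarrow>\<^sub>E {- (2 * int k) .. 2 * int k})" by (intro finite_PiE) auto
  then show ?thesis unfolding OF_def by (rule finite_subset[rotated]) auto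
qed

lemma Kf_lt: "u \<in> Iv n \<Longrightarrow> v \<in> Iv n \<Longrightarrow> Kf n g u < Kf n g v \<longleftrightarrow> lexc (g u) u (g v) v"
  unfolding Kf_def by (rule lex_key) auto

lemma Kf_odd: "g \<in> OF n k \<Longrightarrow> v \<in> Iv n \<Longrightarrow> Kf n g (- v) = - Kf n g v"
  unfolding Kf_def using OF_odd[of g n k v] by auto

lemma Kf_inj: "inj_on (Kf n g) (Iv n)"
proof
  fix u v assume uv: "u \<in> Iv n" "v \<in> Iv n" "Kf n g u = Kf n g v"
  show "u = v"
  proof (rule ccontr)
    assume "u \<noteq> v"
    then have "u < v \<or> v < u" by auto
    then show False
    proof
      assume "u < v"
      then have "\<not> (Kf n g u < Kf n g v) \<or> \<not> (Kf n g v < Kf n g u)" using uv by auto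
      then show False using Kf_lt[of u n v g] Kf_lt[of v n u g] uv \<open>u < v\<close> unfolding lexc_def by (auto split: if_splits)
    next
      assume "v < u"
      then show False using Kf_lt[of u n v g] Kf_lt[of v n u g] uv unfolding lexc_def by (auto split: if_splits)
    qed
  qed
qed

lemma lexc_asym: "u \<noteq> v \<Longrightarrow> lexc x u y v \<Longrightarrow> \<not> lexc y v x u"
  unfolding lexc_def by auto

lemma lexc_trans: "lexc x u y v \<Longrightarrow> lexc y v z w \<Longrightarrow> lexc x u z w"
  unfolding lexc_def by (auto split: if_splits)

lemma lexc_le: "lexc x u y v \<Longrightarrow> x \<le> y"
  unfolding lexc_def by auto

lemma chain_int:
  fixes f :: "int \<Rightarrow> int"
  assumes "\<And>p. a \<le> p \<Longrightarrow> p < b \<Longrightarrow> f p < f (p + 1)" "a \<le> p" "p < q" "q \<le> b"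
  shows "f p < f q"
proof -
  have "p + 1 + int d \<le> b \<longrightarrow> f p < f (p + 1 + int d)" for d
  proof (induction d)
    case 0 then show ?case using assms(1,2) by auto
  next
    case (Suc d)
    show ?case
    proof
      assume "p + 1 + int (Suc d) \<le> b"
      then have "f p < f (p + 1 + int d)" "f (p + 1 + int d) < f (p + 1 + int d + 1)"
        using Suc assms(1)[of "p + 1 + int d"] assms(2) by auto
      then show "f p < f (p + 1 + int (Suc d))" by (simp add: add.assoc)
    qed
  qed
  from this[of "nat (q - p - 1)"] show ?thesis using assms(3,4) by simp
qed



lemma sorted_map_eq:
  fixes K :: "int \<Rightarrow> int"
  assumes pp: "\<pi> permutes Iv n" and inj: "inj_on K (Iv n)"
    and st: "\<forall>p\<in>Iv n. \<forall>q\<in>Iv n. p < q \<longrightarrow> K (\<pi> p) < K (\<pi> q)"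
  shows "map (\<lambda>p. K (\<pi> p)) [- int n..int n] = sorted_list_of_set (K ` Iv n)"
proof -
  have s1: "sorted_wrt (<) (map (\<lambda>p. K (\<pi> p)) [- int n..int n])"
    unfolding sorted_wrt_map
    by (rule sorted_wrt_mono_rel[OF _ sorted_wrt_upto]) (use st in auto)
  have s2: "set (map (\<lambda>p. K (\<pi> p)) [- int n..int n]) = K ` Iv n"
  proof -
    have "set (map (\<lambda>p. K (\<pi> p)) [- int n..int n]) = K ` (\<pi> ` Iv n)" by (simp add: image_image)
    also have "\<pi> ` Iv n = Iv n" by (rule permutes_image[OF pp])
    finally show ?thesis .
  qed
  have s3: "length (map (\<lambda>p. K (\<pi> p)) [- int n..int n]) = card (K ` Iv n)"
    by (simp add: card_image[OF inj])
  have fin: "finite (K ` Iv n)" by simp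
  show ?thesis
    using sorted_list_of_set_unique[OF fin, THEN iffD1, OF conjI[OF s1 conjI[OF s2 s3]]] by simp
qed

lemma sort_unique:
  fixes K :: "int \<Rightarrow> int"
  assumes "\<pi>1 permutes Iv n" "\<pi>2 permutes Iv n" and inj: "inj_on K (Iv n)"
    and "\<forall>p\<in>Iv n. \<forall>q\<in>Iv n. p < q \<longrightarrow> K (\<pi>1 p) < K (\<pi>1 q)"
    and "\<forall>p\<in>Iv n. \<forall>q\<in>Iv n. p < q \<longrightarrow> K (\<pi>2 p) < K (\<pi>2 q)"
  shows "\<pi>1 = \<pi>2"
proof
  fix p
  show "\<pi>1 p = \<pi>2 p"
  proof (cases "p \<in> Iv n")
    case True
    have e: "map (\<lambda>p. K (\<pi>1 p)) [- int n..int n] = map (\<lambda>p. K (\<pi>2 p)) [- int n..int n]"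
      using sorted_map_eq[OF assms(1) inj assms(4)] sorted_map_eq[OF assms(2) inj assms(5)] by simp
    define i where "i = nat (p + int n)"
    have i: "i < length [- int n..int n]" "[- int n..int n] ! i = p"
      using True unfolding i_def by (auto simp: nth_upto)
    have "K (\<pi>1 p) = K (\<pi>2 p)" using arg_cong[OF e, of "\<lambda>xs. xs ! i"] i by simp
    moreover have "\<pi>1 p \<in> Iv n" "\<pi>2 p \<in> Iv n"
      using True permutes_in_image[OF assms(1)] permutes_in_image[OF assms(2)] by auto
    ultimately show ?thesis using inj by (meson inj_onD)
  next
    case False
    then show ?thesis using permutes_not_in[OF assms(1)] permutes_not_in[OF assms(2)] by simp
  qed
qed

lemma sort_exists:
  fixes K :: "int \<Rightarrow> int"
  assumes inj: "inj_on K (Iv n)"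
  shows "\<exists>\<pi>. \<pi> permutes Iv n \<and> (\<forall>p\<in>Iv n. \<forall>q\<in>Iv n. p < q \<longrightarrow> K (\<pi> p) < K (\<pi> q))"
proof -
  define L where "L = sorted_list_of_set (K ` Iv n)"
  have lenL: "length L = 2 * n + 1" unfolding L_def by (simp add: card_image[OF inj])
  have setL: "set L = K ` Iv n" unfolding L_def by simp
  have sortL: "sorted_wrt (<) L" unfolding L_def by (rule strict_sorted_list_of_set)
  have distL: "distinct L" unfolding L_def by simp
  define \<pi> where "\<pi> p = (if p \<in> Iv n then the_inv_into (Iv n) K (L ! nat (p + int n)) else p)" for p
  have idx: "nat (p + int n) < length L" if "p \<in> Iv n" for p using that lenL by auto
  have inL: "L ! nat (p + int n) \<in> K ` Iv n" if "p \<in> Iv n" for p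
    using idx[OF that] setL nth_mem by blast
  have pin: "\<pi> p \<in> Iv n" if "p \<in> Iv n" for p
    using that the_inv_into_into[OF inj inL[OF that] subset_refl] unfolding \<pi>_def by simp
  have Kp: "K (\<pi> p) = L ! nat (p + int n)" if "p \<in> Iv n" for p
    using that inL[OF that] unfolding \<pi>_def by (simp add: f_the_inv_into_f[OF inj])
  have injp: "inj_on \<pi> (Iv n)"
  proof
    fix p q assume pq: "p \<in> Iv n" "q \<in> Iv n" "\<pi> p = \<pi> q"
    then have "L ! nat (p + int n) = L ! nat (q + int n)" using Kp by metis
    then have "nat (p + int n) = nat (q + int n)" using nth_eq_iff_index_eq[OF distL idx[OF pq(1)] idx[OF pq(2)]] by simp
    then show "p = q" using pq eq_nat_nat_iff[of "p + int n" "q + int n"] by simp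
  qed
  have img: "\<pi> ` Iv n = Iv n" by (rule endo_inj_surj[OF finite_atLeastAtMost_int image_subsetI[OF pin] injp])
  have bij: "bij_betw \<pi> (Iv n) (Iv n)" unfolding bij_betw_def using injp img by simp
  have outp: "\<pi> x = x" if "x \<notin> Iv n" for x using that unfolding \<pi>_def by auto
  have "\<pi> permutes Iv n" by (rule bij_imp_permutes[OF bij outp])
  moreover have "\<forall>p\<in>Iv n. \<forall>q\<in>Iv n. p < q \<longrightarrow> K (\<pi> p) < K (\<pi> q)"
  proof (intro ballI impI)
    fix p q assume pq: "p \<in> Iv n" "q \<in> Iv n" "p < q"
    have "L ! nat (p + int n) < L ! nat (q + int n)"
      by (rule sorted_wrt_nth_less[OF sortL]) (use pq idx in auto)
    then show "K (\<pi> p) < K (\<pi> q)" using Kp pq by simp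
  qed
  ultimately show ?thesis by blast
qed

lemma compat_Kstrict: "compat n \<pi> g = (\<forall>p\<in>Iv n. \<forall>q\<in>Iv n. p < q \<longrightarrow> Kf n g (\<pi> p) < Kf n g (\<pi> q))"
  unfolding compat_def by simp

lemma permg_ex1:
  assumes g: "g \<in> OF n k"
  shows "\<exists>!\<pi>. \<pi> \<in> signed_perms n \<and> compat n \<pi> g"
proof -
  obtain \<pi> where pp: "\<pi> permutes Iv n" and st: "\<forall>p\<in>Iv n. \<forall>q\<in>Iv n. p < q \<longrightarrow> Kf n g (\<pi> p) < Kf n g (\<pi> q)"
    using sort_exists[OF Kf_inj] by blast
  define \<pi>' where "\<pi>' p = - \<pi> (- p)" for p
  have negI: "- p \<in> Iv n \<longleftrightarrow> p \<in> Iv n" for p by auto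
  have pin: "\<pi> p \<in> Iv n \<longleftrightarrow> p \<in> Iv n" for p by (rule permutes_in_image[OF pp])
  have pin': "\<pi>' p \<in> Iv n" if "p \<in> Iv n" for p
  proof -
    have "- p \<in> Iv n" using that by simp
    then have "\<pi> (- p) \<in> Iv n" unfolding pin .
    then show ?thesis unfolding \<pi>'_def by simp
  qed
  have injp': "inj_on \<pi>' (Iv n)"
  proof
    fix p q assume "p \<in> Iv n" "q \<in> Iv n" "\<pi>' p = \<pi>' q"
    then have "\<pi> (- p) = \<pi> (- q)" unfolding \<pi>'_def by simp
    then have "- p = - q" by (rule injD[OF permutes_inj[OF pp]])
    then show "p = q" by simp
  qed
  have img: "\<pi>' ` Iv n = Iv n" by (rule endo_inj_surj[OF finite_atLeastAtMost_int image_subsetI[OF pin'] injp'])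
  have out: "\<pi>' p = p" if "p \<notin> Iv n" for p
  proof -
    have "- p \<notin> Iv n" using that by auto
    then show ?thesis unfolding \<pi>'_def using permutes_not_in[OF pp] by simp
  qed
  have bij: "bij_betw \<pi>' (Iv n) (Iv n)" unfolding bij_betw_def using injp' img by simp
  have pp': "\<pi>' permutes Iv n" by (rule bij_imp_permutes[OF bij out])
  have st': "\<forall>p\<in>Iv n. \<forall>q\<in>Iv n. p < q \<longrightarrow> Kf n g (\<pi>' p) < Kf n g (\<pi>' q)"
  proof (intro ballI impI)
    fix p q assume pq: "p \<in> Iv n" "q \<in> Iv n" "p < q"
    have m: "- p \<in> Iv n" "- q \<in> Iv n" "- q < - p" using pq by auto
    have lt: "Kf n g (\<pi> (- q)) < Kf n g (\<pi> (- p))" using st[rule_format, OF m(2) m(1) m(3)] .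
    have pm: "\<pi> (- p) \<in> Iv n" "\<pi> (- q) \<in> Iv n" unfolding pin by (rule m(1), rule m(2))
    have "Kf n g (\<pi>' p) = - Kf n g (\<pi> (- p))" "Kf n g (\<pi>' q) = - Kf n g (\<pi> (- q))"
      unfolding \<pi>'_def using Kf_odd[OF g pm(1)] Kf_odd[OF g pm(2)] by simp_all
    then show "Kf n g (\<pi>' p) < Kf n g (\<pi>' q)" using lt by simp
  qed
  have eq: "\<pi>' = \<pi>" by (rule sort_unique[OF pp' pp Kf_inj st' st])
  have odd: "\<pi> (- i) = - \<pi> i" for i using fun_cong[OF eq, of "- i"] unfolding \<pi>'_def by simp
  have "\<pi> \<in> signed_perms n" unfolding signed_perms_def using pp odd by simp
  moreover have "compat n \<pi> g" unfolding compat_def by (rule st)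
  ultimately have ex: "\<pi> \<in> signed_perms n \<and> compat n \<pi> g" by simp
  show ?thesis
  proof (rule ex1I[where a = \<pi>])
    show "\<pi> \<in> signed_perms n \<and> compat n \<pi> g" by (rule ex)
  next
    fix \<rho> assume "\<rho> \<in> signed_perms n \<and> compat n \<rho> g"
    then have "\<rho> permutes Iv n" "\<forall>p\<in>Iv n. \<forall>q\<in>Iv n. p < q \<longrightarrow> Kf n g (\<rho> p) < Kf n g (\<rho> q)"
      using sp_permutes unfolding compat_def by blast+
    then show "\<rho> = \<pi>" by (rule sort_unique[OF _ pp Kf_inj _ st])
  qed
qed

definition permg :: "nat \<Rightarrow> (int \<Rightarrow> int) \<Rightarrow> (int \<Rightarrow> int)" where
  "permg n g = (THE \<pi>. \<pi> \<in> signed_perms n \<and> compat n \<pi> g)"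

lemma permg: assumes "g \<in> OF n k" shows "permg n g \<in> signed_perms n" "compat n (permg n g) g"
  using theI'[OF permg_ex1[OF assms]] unfolding permg_def by auto

lemma permg_eq: assumes "g \<in> OF n k" "\<pi> \<in> signed_perms n" "compat n \<pi> g" shows "permg n g = \<pi>"
  unfolding permg_def by (rule the1_equality[OF permg_ex1[OF assms(1)]]) (use assms in simp)



lemma compat_steps:
  assumes sg: "\<sigma> \<in> signed_perms n" and g: "g \<in> OF n k"
  shows "compat n \<sigma> g \<longleftrightarrow> (\<forall>s<n. Kf n g (\<sigma> (int s)) < Kf n g (\<sigma> (int (Suc s))))"
proof
  assume "compat n \<sigma> g"
  then show "\<forall>s<n. Kf n g (\<sigma> (int s)) < Kf n g (\<sigma> (int (Suc s)))"
    unfolding compat_def by auto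
next
  assume st: "\<forall>s<n. Kf n g (\<sigma> (int s)) < Kf n g (\<sigma> (int (Suc s)))"
  define key where "key p = Kf n g (\<sigma> p)" for p
  have keyodd: "key (- p) = - key p" if "p \<in> Iv n" for p
    unfolding key_def using sp_odd[OF sg] Kf_odd[OF g sp_in[OF sg that]] by simp
  have step: "key p < key (p + 1)" if "- int n \<le> p" "p < int n" for p
  proof (cases "p \<ge> 0")
    case True
    then show ?thesis using st[rule_format, of "nat p"] that unfolding key_def by (simp add: add.commute)
  next
    case False
    define s where "s = nat (- p - 1)"
    have s: "s < n" "int s = - p - 1" using False that unfolding s_def by auto
    have "key (int s) < key (int s + 1)" using st[rule_format, OF s(1)] unfolding key_def by (simp add: add.commute)
    moreover have "key p = - key (int s + 1)"
    proof -
      have e: "p = - (int s + 1)" using s by simp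
      have "int s + 1 \<in> Iv n" using s by simp
      then show ?thesis unfolding e by (rule keyodd)
    qed
    moreover have "key (p + 1) = - key (int s)"
    proof -
      have e: "p + 1 = - int s" using s by simp
      have "int s \<in> Iv n" using s by simp
      then show ?thesis unfolding e by (rule keyodd)
    qed
    ultimately show ?thesis by simp
  qed
  show "compat n \<sigma> g"
    unfolding compat_def
  proof (intro ballI impI)
    fix p q assume "p \<in> Iv n" "q \<in> Iv n" "p < q"
    then show "Kf n g (\<sigma> p) < Kf n g (\<sigma> q)"
      using chain_int[of "- int n" "int n" key p q] step unfolding key_def by auto
  qed
qed

lemma stepc_lexc:
  "\<sigma> (int s) \<noteq> \<sigma> (int (Suc s)) \<Longrightarrow>
   stepc \<sigma> s x y \<longleftrightarrow> lexc (int x) (\<sigma> (int s)) (int y) (\<sigma> (int (Suc s)))"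
  unfolding stepc_def lexc_def by (cases "even x") auto

lemma omegaB_OF:
  assumes sg: "\<sigma> \<in> signed_perms n"
  shows "omegaB n \<sigma> k = card {g \<in> OF n k. compat n \<sigma> g}"
proof -
  define A where "A = {g \<in> OF n k. compat n \<sigma> g}"
  define \<Psi> where "\<Psi> g = restrict (\<lambda>s. nat (g (\<sigma> (int s)))) {0..n}" for g :: "int \<Rightarrow> int"
  define \<Gamma> where "\<Gamma> a = restrict (\<lambda>v. if inv \<sigma> v \<ge> 0 then int (a (nat (inv \<sigma> v))) else - int (a (nat (- inv \<sigma> v)))) (Iv n)"
    for a :: "nat \<Rightarrow> nat"
  have sI: "int s \<in> Iv n" if "s \<le> n" for s using that by auto
  have neq: "\<sigma> (int s) \<noteq> \<sigma> (int (Suc s))" for s using sp_inj[OF sg] by fastforce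
  have steps: "compat n \<sigma> g \<longleftrightarrow> (\<forall>s<n. lexc (g (\<sigma> (int s))) (\<sigma> (int s)) (g (\<sigma> (int (Suc s)))) (\<sigma> (int (Suc s))))"
    if g': "g \<in> OF n k" for g
  proof -
    have memb: "\<sigma> (int s) \<in> Iv n" "\<sigma> (int (Suc s)) \<in> Iv n" if "s < n" for s
      by (intro sp_in[OF sg]; use that in simp)+
    have "Kf n g (\<sigma> (int s)) < Kf n g (\<sigma> (int (Suc s))) \<longleftrightarrow> lexc (g (\<sigma> (int s))) (\<sigma> (int s)) (g (\<sigma> (int (Suc s)))) (\<sigma> (int (Suc s)))"
      if "s < n" for s using Kf_lt[OF memb[OF that]] .
    then show ?thesis unfolding compat_steps[OF sg g'] by auto
  qed
  have nonneg: "0 \<le> g (\<sigma> (int s))" if "g \<in> A" "s \<le> n" for g s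
  proof (cases "s = 0")
    case True then show ?thesis using that sp_zero[OF sg] OF_zero[of g n k] unfolding A_def by simp
  next
    case False
    then have "Kf n g (\<sigma> 0) < Kf n g (\<sigma> (int s))" using that unfolding A_def compat_def by auto
    moreover have m0: "\<sigma> 0 \<in> Iv n" using sp_zero[OF sg] by simp
    moreover have ms: "\<sigma> (int s) \<in> Iv n" by (rule sp_in[OF sg sI[OF that(2)]])
    ultimately have "lexc (g (\<sigma> 0)) (\<sigma> 0) (g (\<sigma> (int s))) (\<sigma> (int s))"
      using Kf_lt[OF m0 ms, of g] by simp
    then have "g (\<sigma> 0) \<le> g (\<sigma> (int s))" by (rule lexc_le)
    then show ?thesis using that sp_zero[OF sg] OF_zero[of g n k] unfolding A_def by simp
  qed
  have invI: "inv \<sigma> v \<in> Iv n" if "v \<in> Iv n" for v using sp_in[OF sp_inv[OF sg] that] .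
  have "bij_betw \<Psi> A (Sq \<sigma> n (2 * k))"
  proof (rule bij_betw_byWitness[where f' = \<Gamma>])
    show "\<forall>g\<in>A. \<Gamma> (\<Psi> g) = g"
    proof
      fix g assume gA: "g \<in> A"
      then have g: "g \<in> OF n k" unfolding A_def by simp
      show "\<Gamma> (\<Psi> g) = g"
      proof
        fix v show "\<Gamma> (\<Psi> g) v = g v"
        proof (cases "v \<in> Iv n")
          case True
          define p where "p = inv \<sigma> v"
          have p: "p \<in> Iv n" "\<sigma> p = v" using invI[OF True] sp_inv_app[OF sg] unfolding p_def by auto
          have G: "\<Gamma> (\<Psi> g) v = (if p \<ge> 0 then int (\<Psi> g (nat p)) else - int (\<Psi> g (nat (- p))))"
            using True unfolding \<Gamma>_def p_def by simp
          show ?thesis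
          proof (cases "p \<ge> 0")
            case True
            then have np: "nat p \<le> n" "int (nat p) = p" using p by auto
            have "\<Psi> g (nat p) = nat (g v)" using np p unfolding \<Psi>_def by simp
            moreover have "0 \<le> g v" using nonneg[OF gA np(1)] np p by simp
            ultimately show ?thesis using G True by simp
          next
            case False
            then have np: "nat (- p) \<le> n" "int (nat (- p)) = - p" using p by auto
            have sv: "\<sigma> (- p) = - v" using sp_odd[OF sg] p by simp
            have "\<Psi> g (nat (- p)) = nat (g (- v))" using np sv unfolding \<Psi>_def by simp
            moreover have "0 \<le> g (- v)" using nonneg[OF gA np(1)] np sv by simp
            moreover have "g (- v) = - g v" using OF_odd[OF g \<open>v \<in> Iv n\<close>] .
            ultimately show ?thesis using G False by simp
          qed
        next
          case False
          then show ?thesis using OF_out[OF g False] unfolding \<Gamma>_def by auto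
        qed
      qed
    qed
    show "\<forall>a\<in>Sq \<sigma> n (2 * k). \<Psi> (\<Gamma> a) = a"
    proof
      fix a assume a: "a \<in> Sq \<sigma> n (2 * k)"
      show "\<Psi> (\<Gamma> a) = a"
      proof
        fix s show "\<Psi> (\<Gamma> a) s = a s"
        proof (cases "s \<le> n")
          case True
          then have "\<sigma> (int s) \<in> Iv n" using sp_in[OF sg sI] by blast
          then show ?thesis using True sp_app_inv[OF sg, of "int s"] unfolding \<Psi>_def \<Gamma>_def by simp
        next
          case False
          then show ?thesis using a unfolding \<Psi>_def Sq_def by (auto simp: PiE_def extensional_def)
        qed
      qed
    qed
    show "\<Psi> ` A \<subseteq> Sq \<sigma> n (2 * k)"
    proof
      fix a assume "a \<in> \<Psi> ` A"
      then obtain g where gA: "g \<in> A" and a: "a = \<Psi> g" by blast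
      then have g: "g \<in> OF n k" and cg: "compat n \<sigma> g" unfolding A_def by auto
      have ub: "g (\<sigma> (int s)) \<le> 2 * int k" if "s \<le> n" for s
        using OF_range[OF g sp_in[OF sg sI[OF that]]] by simp
      have av: "int (a s) = g (\<sigma> (int s))" if "s \<le> n" for s
        using nonneg[OF gA that] that unfolding a \<Psi>_def by simp
      show "a \<in> Sq \<sigma> n (2 * k)"
        unfolding Sq_def
      proof (intro CollectI conjI allI impI)
        show "a \<in> {0..n} \<rightarrow>\<^sub>E {0..2 * k}"
          unfolding a \<Psi>_def using ub by (auto simp: nat_le_iff)
        show "a 0 = 0" unfolding a \<Psi>_def using sp_zero[OF sg] OF_zero[OF g] by simp
        fix s assume s: "s < n"
        have "lexc (g (\<sigma> (int s))) (\<sigma> (int s)) (g (\<sigma> (int (Suc s)))) (\<sigma> (int (Suc s)))"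
          using steps[OF g] cg s by blast
        then show "stepc \<sigma> s (a s) (a (Suc s))"
          using stepc_lexc[OF neq] av[of s] av[of "Suc s"] s by simp
      qed
    qed
    show "\<Gamma> ` Sq \<sigma> n (2 * k) \<subseteq> A"
    proof
      fix g assume "g \<in> \<Gamma> ` Sq \<sigma> n (2 * k)"
      then obtain a where a: "a \<in> Sq \<sigma> n (2 * k)" and ga: "g = \<Gamma> a" by blast
      have ar: "a i \<le> 2 * k" if "i \<le> n" for i using a that unfolding Sq_def by auto
      have a0: "a 0 = 0" using a unfolding Sq_def by auto
      have gv: "g (\<sigma> (int s)) = int (a s)" if "s \<le> n" for s
        using sp_in[OF sg sI[OF that]] sp_app_inv[OF sg, of "int s"] unfolding ga \<Gamma>_def by simp
      have gOF: "g \<in> OF n k"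
        unfolding OF_def
      proof (intro CollectI conjI ballI)
        show "g \<in> Iv n \<rightarrow>\<^sub>E {- (2 * int k)..2 * int k}"
        proof (rule PiE_I)
          fix v assume v: "v \<in> Iv n"
          have "nat (inv \<sigma> v) \<le> n" "nat (- inv \<sigma> v) \<le> n" using invI[OF v] by auto
          then show "g v \<in> {- (2 * int k)..2 * int k}"
            using ar[of "nat (inv \<sigma> v)"] ar[of "nat (- inv \<sigma> v)"] v unfolding ga \<Gamma>_def by auto
        next
          fix v assume "v \<notin> Iv n" then show "g v = undefined" unfolding ga \<Gamma>_def by auto
        qed
        fix v assume v: "v \<in> Iv n"
        have mv: "- v \<in> Iv n" using v by auto
        define p where "p = inv \<sigma> v"
        have iv: "inv \<sigma> (- v) = - p" unfolding p_def using sp_odd[OF sp_inv[OF sg]] .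
        have G1: "g v = (if p \<ge> 0 then int (a (nat p)) else - int (a (nat (- p))))"
          using v unfolding ga \<Gamma>_def p_def by simp
        have G2: "g (- v) = (if - p \<ge> 0 then int (a (nat (- p))) else - int (a (nat (- (- p)))))"
          using mv unfolding ga \<Gamma>_def by (simp only: restrict_apply' iv)
        show "g (- v) = - g v"
          using G1 G2 a0 by (cases "p = 0") auto
      qed
      have "compat n \<sigma> g"
        unfolding steps[OF gOF]
      proof (intro allI impI)
        fix s assume s: "s < n"
        then have "stepc \<sigma> s (a s) (a (Suc s))" using a unfolding Sq_def by auto
        then show "lexc (g (\<sigma> (int s))) (\<sigma> (int s)) (g (\<sigma> (int (Suc s)))) (\<sigma> (int (Suc s)))"
          using stepc_lexc[OF neq] gv[of s] gv[of "Suc s"] s by simp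
      qed
      then show "g \<in> A" using gOF unfolding A_def by simp
    qed
  qed
  then have "card A = card (Sq \<sigma> n (2 * k))" by (rule bij_betw_same_card)
  then show ?thesis unfolding omegaB_def enriched_Sq A_def by simp
qed



definition comb :: "nat \<Rightarrow> int \<Rightarrow> int \<Rightarrow> int" where
  "comb k j i = j * (4 * int k + 1) + (if even j then i else - i)"

lemma comb_lt:
  assumes "\<bar>i\<bar> \<le> 2 * int k" "\<bar>i'\<bar> \<le> 2 * int k" "j < j'"
  shows "comb k j i < comb k j' i'"
proof -
  define M where "M = 4 * int k + 1"
  have "(j + 1) * M \<le> j' * M" using assms(3) unfolding M_def by (intro mult_right_mono) auto
  then have "j * M + M \<le> j' * M" by (simp add: distrib_right)
  moreover have "(if even j then i else - i) \<le> 2 * int k" "- (2 * int k) \<le> (if even j' then i' else - i')"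
    using assms(1,2) by auto
  ultimately show ?thesis unfolding comb_def M_def[symmetric] using M_def by linarith
qed

lemma comb_inj:
  assumes "\<bar>i\<bar> \<le> 2 * int k" "\<bar>i'\<bar> \<le> 2 * int k" "comb k j i = comb k j' i'"
  shows "j = j' \<and> i = i'"
proof -
  have "j = j'"
  proof (rule ccontr)
    assume "j \<noteq> j'"
    then have "j < j' \<or> j' < j" by auto
    then show False using comb_lt[OF assms(1,2)] comb_lt[OF assms(2,1)] assms(3) by force
  qed
  then show ?thesis using assms(3) unfolding comb_def by (cases "even j'") auto
qed

lemma comb_neg: "comb k (- j) (- i) = - comb k j i"
  unfolding comb_def by simp

lemma comb_even: "even (comb k j i) \<longleftrightarrow> even (j + i)"
  unfolding comb_def by (cases "even j") (auto simp: even_add)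

lemma comb_range:
  assumes "\<bar>j\<bar> \<le> 2 * int l" "\<bar>i\<bar> \<le> 2 * int k"
  shows "\<bar>comb k j i\<bar> \<le> 2 * int (4 * k * l + k + l)"
proof -
  define M where "M = 4 * int k + 1"
  have "\<bar>j * M\<bar> = \<bar>j\<bar> * M" unfolding M_def by (simp add: abs_mult)
  also have "\<dots> \<le> 2 * int l * M" using assms(1) unfolding M_def by (intro mult_right_mono) auto
  finally have a: "\<bar>j * M\<bar> \<le> 2 * int l * M" .
  have b: "\<bar>(if even j then i else - i)\<bar> \<le> 2 * int k" using assms(2) by auto
  have "\<bar>comb k j i\<bar> \<le> \<bar>j * M\<bar> + \<bar>(if even j then i else - i)\<bar>"
    unfolding comb_def M_def by (rule abs_triangle_ineq)
  also have "\<dots> \<le> 2 * int l * M + 2 * int k" using a b by simp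
  also have "\<dots> = 2 * int (4 * k * l + k + l)" unfolding M_def by (simp add: algebra_simps)
  finally show ?thesis .
qed

definition dj :: "nat \<Rightarrow> int \<Rightarrow> int" where
  "dj k F = (F + 2 * int k) div (4 * int k + 1)"

definition di :: "nat \<Rightarrow> int \<Rightarrow> int" where
  "di k F = (let r = (F + 2 * int k) mod (4 * int k + 1) - 2 * int k in if even (dj k F) then r else - r)"

lemma comb_digits:
  assumes "\<bar>F\<bar> \<le> 2 * int (4 * k * l + k + l)"
  shows "\<bar>dj k F\<bar> \<le> 2 * int l" "\<bar>di k F\<bar> \<le> 2 * int k" "comb k (dj k F) (di k F) = F"
proof -
  define M where "M = 4 * int k + 1"
  define j where "j = dj k F"
  define r where "r = (F + 2 * int k) mod M"
  have M: "M > 0" unfolding M_def by simp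
  have dec: "F + 2 * int k = j * M + r" unfolding j_def r_def dj_def M_def[symmetric] by simp
  have r: "0 \<le> r" "r < M" unfolding r_def using M by auto
  have di: "di k F = (if even j then r - 2 * int k else - (r - 2 * int k))"
    unfolding di_def j_def[symmetric] r_def M_def Let_def by simp
  show "\<bar>di k F\<bar> \<le> 2 * int k" using r unfolding di M_def by auto
  show "comb k (dj k F) (di k F) = F"
    unfolding comb_def j_def[symmetric] di M_def[symmetric] using dec by auto
  have F: "F \<le> 2 * int l * M + 2 * int k" "- (2 * int l * M) - 2 * int k \<le> F"
    using assms unfolding M_def by (auto simp: algebra_simps abs_le_iff)
  have "j \<le> 2 * int l"
  proof (rule ccontr)
    assume "\<not> j \<le> 2 * int l"
    then have "(2 * int l + 1) * M \<le> j * M" using M by (intro mult_right_mono) auto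
    then have "2 * int l * M + M \<le> j * M" by (simp add: distrib_right)
    then show False using dec F r unfolding M_def by linarith
  qed
  moreover have "- (2 * int l) \<le> j"
  proof (rule ccontr)
    assume "\<not> - (2 * int l) \<le> j"
    then have "(j + 1) * M \<le> (- (2 * int l)) * M" using M by (intro mult_right_mono) auto
    then have "j * M + M \<le> - (2 * int l * M)" by (simp add: distrib_right)
    then show False using dec F r unfolding M_def by linarith
  qed
  ultimately show "\<bar>dj k F\<bar> \<le> 2 * int l" unfolding j_def by auto
qed

lemma comb_lexc:
  assumes i: "\<bar>i1\<bar> \<le> 2 * int k" "\<bar>i2\<bar> \<le> 2 * int k"
    and uw: "u \<noteq> w" and ab: "a \<noteq> b" and x: "lexc x1 a x2 b"
    and h1: "a < b \<Longrightarrow> lexc i1 u i2 w" and h2: "b < a \<Longrightarrow> lexc i2 w i1 u"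
  shows "lexc (comb k x1 i1) u (comb k x2 i2) w"
proof (cases "x1 < x2")
  case True
  then show ?thesis using comb_lt[OF i] unfolding lexc_def by blast
next
  case False
  then have eq: "x1 = x2" and c: "if even x1 then a < b else b < a" using x unfolding lexc_def by auto
  show ?thesis
  proof (cases "even x1")
    case True
    then have "a < b" using c by simp
    then have l: "lexc i1 u i2 w" by (rule h1)
    show ?thesis
    proof (cases "i1 < i2")
      case True
      then show ?thesis using \<open>even x1\<close> eq unfolding lexc_def comb_def by simp
    next
      case False
      then have "i1 = i2" "if even i1 then u < w else w < u" using l unfolding lexc_def by auto
      then show ?thesis using \<open>even x1\<close> eq comb_even[of k x1 i1] unfolding lexc_def by (auto simp: even_add)
    qed
  next
    case False
    then have "b < a" using c by simp
    then have l: "lexc i2 w i1 u" by (rule h2)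
    show ?thesis
    proof (cases "i2 < i1")
      case True
      then show ?thesis using \<open>odd x1\<close> eq unfolding lexc_def comb_def by simp
    next
      case False
      then have "i1 = i2" "if even i1 then w < u else u < w" using l unfolding lexc_def by auto
      then show ?thesis using \<open>odd x1\<close> eq comb_even[of k x1 i1] uw unfolding lexc_def
        by (cases "even i1") (auto simp: even_add)
    qed
  qed
qed

definition Phi :: "nat \<Rightarrow> nat \<Rightarrow> (int \<Rightarrow> int) \<Rightarrow> (int \<Rightarrow> int) \<Rightarrow> (int \<Rightarrow> int)" where
  "Phi n k g h = restrict (\<lambda>v. comb k (h (inv (permg n g) v)) (g v)) (Iv n)"

lemma Phi_OF:
  assumes g: "g \<in> OF n k" and h: "h \<in> OF n l"
  shows "Phi n k g h \<in> OF n (4 * k * l + k + l)"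
proof -
  define \<pi> where "\<pi> = permg n g"
  have sp: "\<pi> \<in> signed_perms n" unfolding \<pi>_def by (rule permg(1)[OF g])
  have invI: "inv \<pi> v \<in> Iv n" if "v \<in> Iv n" for v using sp_in[OF sp_inv[OF sp] that] .
  show ?thesis
    unfolding OF_def
  proof (intro CollectI conjI ballI)
    show "Phi n k g h \<in> Iv n \<rightarrow>\<^sub>E {- (2 * int (4 * k * l + k + l))..2 * int (4 * k * l + k + l)}"
    proof (rule PiE_I)
      fix v assume v: "v \<in> Iv n"
      have "\<bar>comb k (h (inv \<pi> v)) (g v)\<bar> \<le> 2 * int (4 * k * l + k + l)"
        by (rule comb_range[OF OF_range[OF h invI[OF v]] OF_range[OF g v]])
      then show "Phi n k g h v \<in> {- (2 * int (4 * k * l + k + l))..2 * int (4 * k * l + k + l)}"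
        using v unfolding Phi_def \<pi>_def[symmetric] by (simp add: abs_le_iff)
    next
      fix v assume "v \<notin> Iv n" then show "Phi n k g h v = undefined" unfolding Phi_def by auto
    qed
    fix v assume v: "v \<in> Iv n"
    have mv: "- v \<in> Iv n" using v by auto
    have "inv \<pi> (- v) = - inv \<pi> v" using sp_odd[OF sp_inv[OF sp]] .
    then show "Phi n k g h (- v) = - Phi n k g h v"
      using v mv OF_odd[OF g v] OF_odd[OF h invI[OF v]] comb_neg
      unfolding Phi_def \<pi>_def[symmetric] by simp
  qed
qed

lemma Phi_perm:
  assumes g: "g \<in> OF n k" and h: "h \<in> OF n l"
  shows "permg n (Phi n k g h) = permg n g \<circ> permg n h"
proof -
  define \<pi> where "\<pi> = permg n g"
  define \<tau> where "\<tau> = permg n h"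
  define f where "f = Phi n k g h"
  have sp: "\<pi> \<in> signed_perms n" "\<tau> \<in> signed_perms n" unfolding \<pi>_def \<tau>_def by (rule permg(1)[OF g], rule permg(1)[OF h])
  have cp: "compat n \<pi> g" "compat n \<tau> h" unfolding \<pi>_def \<tau>_def by (rule permg(2)[OF g], rule permg(2)[OF h])
  have fOF: "f \<in> OF n (4 * k * l + k + l)" unfolding f_def by (rule Phi_OF[OF g h])
  have fv: "f (\<pi> a) = comb k (h a) (g (\<pi> a))" if "a \<in> Iv n" for a
    using sp_in[OF sp(1) that] sp_app_inv[OF sp(1)] unfolding f_def Phi_def \<pi>_def[symmetric] by simp
  have "compat n (\<pi> \<circ> \<tau>) f"
    unfolding compat_def
  proof (intro ballI impI)
    fix p q assume pq: "p \<in> Iv n" "q \<in> Iv n" "p < q"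
    define a where "a = \<tau> p"
    define b where "b = \<tau> q"
    have ab: "a \<in> Iv n" "b \<in> Iv n" "a \<noteq> b" unfolding a_def b_def
      using sp_in[OF sp(2)] pq sp_inj[OF sp(2), of p q] by auto
    have uv: "\<pi> a \<in> Iv n" "\<pi> b \<in> Iv n" "\<pi> a \<noteq> \<pi> b" using sp_in[OF sp(1)] ab sp_inj[OF sp(1), of a b] by auto
    have x: "lexc (h a) a (h b) b"
      using cp(2) pq ab Kf_lt[of a n b h] unfolding compat_def a_def b_def by auto
    have h1: "lexc (g (\<pi> a)) (\<pi> a) (g (\<pi> b)) (\<pi> b)" if "a < b"
      using cp(1) that ab uv Kf_lt[of "\<pi> a" n "\<pi> b" g] unfolding compat_def by auto
    have h2: "lexc (g (\<pi> b)) (\<pi> b) (g (\<pi> a)) (\<pi> a)" if "b < a"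
      using cp(1) that ab uv Kf_lt[of "\<pi> b" n "\<pi> a" g] unfolding compat_def by auto
    have "lexc (comb k (h a) (g (\<pi> a))) (\<pi> a) (comb k (h b) (g (\<pi> b))) (\<pi> b)"
      by (rule comb_lexc[OF OF_range[OF g uv(1)] OF_range[OF g uv(2)] uv(3) ab(3) x h1 h2])
    then have "Kf n f (\<pi> a) < Kf n f (\<pi> b)" using Kf_lt[OF uv(1,2), of f] fv ab by simp
    then show "Kf n f ((\<pi> \<circ> \<tau>) p) < Kf n f ((\<pi> \<circ> \<tau>) q)" unfolding a_def b_def by simp
  qed
  then show ?thesis using permg_eq[OF fOF sp_comp[OF sp]] unfolding f_def \<pi>_def \<tau>_def by simp
qed

lemma Phi_inj:
  assumes g1: "g1 \<in> OF n k" and h1: "h1 \<in> OF n l" and g2: "g2 \<in> OF n k" and h2: "h2 \<in> OF n l"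
    and e: "Phi n k g1 h1 = Phi n k g2 h2"
  shows "g1 = g2 \<and> h1 = h2"
proof -
  define \<pi>1 where "\<pi>1 = permg n g1"
  define \<pi>2 where "\<pi>2 = permg n g2"
  have sp: "\<pi>1 \<in> signed_perms n" "\<pi>2 \<in> signed_perms n" unfolding \<pi>1_def \<pi>2_def
    by (rule permg(1)[OF g1], rule permg(1)[OF g2])
  have c: "h1 (inv \<pi>1 v) = h2 (inv \<pi>2 v) \<and> g1 v = g2 v" if v: "v \<in> Iv n" for v
  proof -
    have "comb k (h1 (inv \<pi>1 v)) (g1 v) = comb k (h2 (inv \<pi>2 v)) (g2 v)"
      using fun_cong[OF e, of v] v unfolding Phi_def \<pi>1_def[symmetric] \<pi>2_def[symmetric] by simp
    then show ?thesis using comb_inj[OF OF_range[OF g1 v] OF_range[OF g2 v]] by blast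
  qed
  have geq: "g1 = g2"
  proof
    fix v show "g1 v = g2 v" using c[of v] OF_out[OF g1, of v] OF_out[OF g2, of v] by (cases "v \<in> Iv n") auto
  qed
  then have peq: "\<pi>1 = \<pi>2" unfolding \<pi>1_def \<pi>2_def by simp
  have heq: "h1 = h2"
  proof
    fix p show "h1 p = h2 p"
    proof (cases "p \<in> Iv n")
      case True
      then have "\<pi>1 p \<in> Iv n" by (rule sp_in[OF sp(1)])
      then show ?thesis using c[of "\<pi>1 p"] sp_app_inv[OF sp(1)] peq by simp
    next
      case False then show ?thesis using OF_out[OF h1 False] OF_out[OF h2 False] by simp
    qed
  qed
  show ?thesis using geq heq by simp
qed

lemma Phi_surj:
  assumes f: "f \<in> OF n (4 * k * l + k + l)"
  shows "\<exists>g\<in>OF n k. \<exists>h\<in>OF n l. Phi n k g h = f"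
proof -
  define m where "m = 4 * k * l + k + l"
  have fr: "\<bar>f v\<bar> \<le> 2 * int m" if "v \<in> Iv n" for v using OF_range[OF f that] unfolding m_def .
  have dg: "\<bar>dj k (f v)\<bar> \<le> 2 * int l" "\<bar>di k (f v)\<bar> \<le> 2 * int k" "comb k (dj k (f v)) (di k (f v)) = f v"
    if "v \<in> Iv n" for v using comb_digits[OF fr[OF that, unfolded m_def]] by auto
  have dodd: "dj k (f (- v)) = - dj k (f v) \<and> di k (f (- v)) = - di k (f v)" if v: "v \<in> Iv n" for v
  proof -
    have mv: "- v \<in> Iv n" using v by auto
    have "comb k (dj k (f (- v))) (di k (f (- v))) = comb k (- dj k (f v)) (- di k (f v))"
      using dg(3)[OF mv] dg(3)[OF v] OF_odd[OF f v] comb_neg by simp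
    moreover have "\<bar>- di k (f v)\<bar> \<le> 2 * int k" using dg(2)[OF v] by simp
    ultimately show ?thesis using comb_inj[OF dg(2)[OF mv]] by blast
  qed
  define g where "g = restrict (\<lambda>v. di k (f v)) (Iv n)"
  have gOF: "g \<in> OF n k"
    unfolding OF_def
  proof (intro CollectI conjI ballI)
    show "g \<in> Iv n \<rightarrow>\<^sub>E {- (2 * int k)..2 * int k}"
    proof (rule PiE_I)
      fix v assume v: "v \<in> Iv n"
      show "g v \<in> {- (2 * int k)..2 * int k}" using dg(2)[OF v] v unfolding g_def by (auto simp: abs_le_iff)
    next
      fix v assume "v \<notin> Iv n" then show "g v = undefined" unfolding g_def by auto
    qed
    fix v assume v: "v \<in> Iv n"
    then have "- v \<in> Iv n" by auto
    then show "g (- v) = - g v" using v dodd[OF v] unfolding g_def by simp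
  qed
  define \<pi> where "\<pi> = permg n g"
  have sp: "\<pi> \<in> signed_perms n" unfolding \<pi>_def by (rule permg(1)[OF gOF])
  define h where "h = restrict (\<lambda>p. dj k (f (\<pi> p))) (Iv n)"
  have hOF: "h \<in> OF n l"
    unfolding OF_def
  proof (intro CollectI conjI ballI)
    show "h \<in> Iv n \<rightarrow>\<^sub>E {- (2 * int l)..2 * int l}"
    proof (rule PiE_I)
      fix v assume v: "v \<in> Iv n"
      show "h v \<in> {- (2 * int l)..2 * int l}" using dg(1)[OF sp_in[OF sp v]] v unfolding h_def by (auto simp: abs_le_iff)
    next
      fix v assume "v \<notin> Iv n" then show "h v = undefined" unfolding h_def by auto
    qed
    fix p assume p: "p \<in> Iv n"
    then have "- p \<in> Iv n" by auto
    then show "h (- p) = - h p" using p dodd[OF sp_in[OF sp p]] sp_odd[OF sp] unfolding h_def by simp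
  qed
  have "Phi n k g h = f"
  proof
    fix v show "Phi n k g h v = f v"
    proof (cases "v \<in> Iv n")
      case True
      have iv: "inv \<pi> v \<in> Iv n" using sp_in[OF sp_inv[OF sp] True] .
      have "Phi n k g h v = comb k (h (inv \<pi> v)) (g v)" using True unfolding Phi_def \<pi>_def by simp
      also have "h (inv \<pi> v) = dj k (f v)" using iv sp_inv_app[OF sp] unfolding h_def by simp
      also have "g v = di k (f v)" using True unfolding g_def by simp
      finally show ?thesis using dg(3)[OF True] by simp
    next
      case False then show ?thesis using OF_out[OF f False] unfolding Phi_def by auto
    qed
  qed
  then show ?thesis using gOF hOF by blast
qed



lemma count_main:
  assumes sg: "\<sigma> \<in> signed_perms n"
  shows "(\<Sum>\<pi>\<in>signed_perms n. \<Sum>\<tau>\<in>signed_perms n.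
            if \<pi> \<circ> \<tau> = \<sigma> then omegaB n \<pi> k * omegaB n \<tau> l else 0) = omegaB n \<sigma> (4 * k * l + k + l)"
proof -
  define B where "B = signed_perms n"
  define A where "A j \<pi> = {g \<in> OF n j. permg n g = \<pi>}" for j \<pi>
  have omA: "omegaB n \<pi> j = card (A j \<pi>)" if "\<pi> \<in> B" for \<pi> j
  proof -
    have "{g \<in> OF n j. compat n \<pi> g} = A j \<pi>"
    proof (intro equalityI subsetI)
      fix g assume "g \<in> {g \<in> OF n j. compat n \<pi> g}"
      then show "g \<in> A j \<pi>" using permg_eq[of g n j \<pi>] that unfolding A_def B_def by auto
    next
      fix g assume "g \<in> A j \<pi>"
      then show "g \<in> {g \<in> OF n j. compat n \<pi> g}" using permg(2)[of g n j] unfolding A_def by auto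
    qed
    then show ?thesis using omegaB_OF[of \<pi> n j] that unfolding B_def by simp
  qed
  define X where "X = OF n k \<times> OF n l"
  define S where "S = {x \<in> X. permg n (fst x) \<circ> permg n (snd x) = \<sigma>}"
  have finX: "finite X" unfolding X_def using finite_OF by simp
  have finS: "finite S" unfolding S_def using finX by simp
  have finB: "finite B" unfolding B_def by (rule finite_sp)
  define pp where "pp x = (permg n (fst x), permg n (snd x))" for x
  have ppS: "pp ` S \<subseteq> B \<times> B"
  proof
    fix y assume "y \<in> pp ` S"
    then obtain g h where "(g, h) \<in> X" "y = pp (g, h)" unfolding S_def by auto
    then show "y \<in> B \<times> B" unfolding X_def pp_def B_def using permg(1) by auto
  qed
  have "card S = (\<Sum>y\<in>B \<times> B. card {x\<in>S. pp x = y})"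
    using sum.group[OF finS _ ppS, of "\<lambda>_. 1::nat"] finB by simp
  also have "\<dots> = (\<Sum>y\<in>B \<times> B. if fst y \<circ> snd y = \<sigma> then card (A k (fst y)) * card (A l (snd y)) else 0)"
  proof (rule sum.cong[OF refl])
    fix y :: "(int \<Rightarrow> int) \<times> (int \<Rightarrow> int)"
    obtain \<pi> \<tau> where y: "y = (\<pi>, \<tau>)" by fastforce
    have "{x\<in>S. pp x = y} = (if \<pi> \<circ> \<tau> = \<sigma> then A k \<pi> \<times> A l \<tau> else {})"
      unfolding S_def X_def A_def pp_def y by auto
    then show "card {x\<in>S. pp x = y} = (if fst y \<circ> snd y = \<sigma> then card (A k (fst y)) * card (A l (snd y)) else 0)"
      unfolding y by (simp add: card_cartesian_product)
  qed
  also have "\<dots> = (\<Sum>\<pi>\<in>B. \<Sum>\<tau>\<in>B. if \<pi> \<circ> \<tau> = \<sigma> then omegaB n \<pi> k * omegaB n \<tau> l else 0)"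
    unfolding sum.cartesian_product by (rule sum.cong[OF refl]) (auto simp: omA)
  finally have lhs: "card S = (\<Sum>\<pi>\<in>B. \<Sum>\<tau>\<in>B. if \<pi> \<circ> \<tau> = \<sigma> then omegaB n \<pi> k * omegaB n \<tau> l else 0)" .
  define F where "F x = Phi n k (fst x) (snd x)" for x
  have inj: "inj_on F S"
  proof
    fix x y assume "x \<in> S" "y \<in> S" "F x = F y"
    then show "x = y" using Phi_inj[of "fst x" n k "snd x" l "fst y" "snd y"]
      unfolding S_def X_def F_def by (auto simp: prod_eq_iff)
  qed
  have img: "F ` S = A (4 * k * l + k + l) \<sigma>"
  proof (intro equalityI subsetI)
    fix f assume "f \<in> F ` S"
    then obtain g h where gh: "g \<in> OF n k" "h \<in> OF n l" "permg n g \<circ> permg n h = \<sigma>" "f = Phi n k g h"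
      unfolding S_def X_def F_def by auto
    then show "f \<in> A (4 * k * l + k + l) \<sigma>" unfolding A_def using Phi_OF Phi_perm by simp
  next
    fix f assume "f \<in> A (4 * k * l + k + l) \<sigma>"
    then have f: "f \<in> OF n (4 * k * l + k + l)" "permg n f = \<sigma>" unfolding A_def by auto
    obtain g h where gh: "g \<in> OF n k" "h \<in> OF n l" "Phi n k g h = f" using Phi_surj[OF f(1)] by blast
    then have "(g, h) \<in> S" unfolding S_def X_def using Phi_perm[OF gh(1,2)] f(2) by simp
    then show "f \<in> F ` S" unfolding F_def using gh(3) by force
  qed
  have "card S = card (A (4 * k * l + k + l) \<sigma>)" using card_image[OF inj] img by simp
  also have "\<dots> = omegaB n \<sigma> (4 * k * l + k + l)" using omA sg unfolding B_def by simp
  finally show ?thesis using lhs unfolding B_def by simp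
qed

abbreviation E2 :: "nat \<Rightarrow> (int \<Rightarrow> int) \<Rightarrow> rat \<Rightarrow> rat \<Rightarrow> rat" where
  "E2 n \<sigma> X Y \<equiv> (\<Sum>\<pi>\<in>signed_perms n. \<Sum>\<tau>\<in>signed_perms n.
      if \<pi> \<circ> \<tau> = \<sigma> then poly (omegaB_poly n \<pi>) X * poly (omegaB_poly n \<tau>) Y else 0)"

lemma E2_nat:
  assumes sg: "\<sigma> \<in> signed_perms n"
  shows "E2 n \<sigma> (of_nat k) (of_nat l) = poly (omegaB_poly n \<sigma>) (4 * of_nat k * of_nat l + of_nat k + of_nat l)"
proof -
  have "E2 n \<sigma> (of_nat k) (of_nat l) = (\<Sum>\<pi>\<in>signed_perms n. \<Sum>\<tau>\<in>signed_perms n.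
            of_nat (if \<pi> \<circ> \<tau> = \<sigma> then omegaB n \<pi> k * omegaB n \<tau> l else 0))"
    by (intro sum.cong refl) (simp add: omegaB_poly_eval)
  also have "\<dots> = of_nat (\<Sum>\<pi>\<in>signed_perms n. \<Sum>\<tau>\<in>signed_perms n.
            if \<pi> \<circ> \<tau> = \<sigma> then omegaB n \<pi> k * omegaB n \<tau> l else 0)"
    by (simp only: of_nat_sum)
  also have "\<dots> = of_nat (omegaB n \<sigma> (4 * k * l + k + l))" by (simp only: count_main[OF sg])
  also have "\<dots> = poly (omegaB_poly n \<sigma>) (of_nat (4 * k * l + k + l))" by (rule omegaB_poly_eval[symmetric])
  finally show ?thesis by simp
qed

lemma E2_all:
  assumes sg: "\<sigma> \<in> signed_perms n"
  shows "E2 n \<sigma> X Y = poly (omegaB_poly n \<sigma>) (4 * X * Y + X + Y)"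
proof -
  have step1: "E2 n \<sigma> (of_nat k) Y = poly (omegaB_poly n \<sigma>) (4 * of_nat k * Y + of_nat k + Y)" for k Y
  proof -
    define Q where "Q = (\<Sum>\<pi>\<in>signed_perms n. \<Sum>\<tau>\<in>signed_perms n.
      if \<pi> \<circ> \<tau> = \<sigma> then smult (poly (omegaB_poly n \<pi>) (of_nat k)) (omegaB_poly n \<tau>) else 0)"
    define R where "R = pcompose (omegaB_poly n \<sigma>) [:of_nat k, 4 * of_nat k + 1:]"
    have pQ: "poly Q Z = E2 n \<sigma> (of_nat k) Z" for Z
      unfolding Q_def poly_sum by (intro sum.cong refl) simp
    have pR: "poly R Z = poly (omegaB_poly n \<sigma>) (4 * of_nat k * Z + of_nat k + Z)" for Z
      unfolding R_def by (simp add: poly_pcompose algebra_simps)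
    have "Q = R" by (rule poly_eq_on_nat) (simp only: pQ pR E2_nat[OF sg])
    then show ?thesis using pQ[of Y] pR[of Y] by simp
  qed
  define Q where "Q = (\<Sum>\<pi>\<in>signed_perms n. \<Sum>\<tau>\<in>signed_perms n.
      if \<pi> \<circ> \<tau> = \<sigma> then smult (poly (omegaB_poly n \<tau>) Y) (omegaB_poly n \<pi>) else 0)"
  define R where "R = pcompose (omegaB_poly n \<sigma>) [:Y, 4 * Y + 1:]"
  have pQ: "poly Q Z = E2 n \<sigma> Z Y" for Z
    unfolding Q_def poly_sum by (intro sum.cong refl) (simp add: mult.commute)
  have pR: "poly R Z = poly (omegaB_poly n \<sigma>) (4 * Z * Y + Z + Y)" for Z
    unfolding R_def by (simp add: poly_pcompose algebra_simps)
  have "Q = R" by (rule poly_eq_on_nat) (simp only: pQ pR step1)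
  then show ?thesis using pQ[of X] pR[of X] by simp
qed

theorem theorem3p8:
  fixes n :: nat and x y :: rat
  assumes "n \<ge> 1"
  shows "ga_mult n (rhoB n x) (rhoB n y) = rhoB n (x * y)"
proof
  fix \<sigma>
  show "ga_mult n (rhoB n x) (rhoB n y) \<sigma> = rhoB n (x * y) \<sigma>"
  proof (cases "\<sigma> \<in> signed_perms n")
    case True
    have "ga_mult n (rhoB n x) (rhoB n y) \<sigma> = E2 n \<sigma> ((x - 1) / 4) ((y - 1) / 4)"
      unfolding ga_mult_def rhoB_def by (intro sum.cong refl) auto
    also have "\<dots> = poly (omegaB_poly n \<sigma>) (4 * ((x - 1) / 4) * ((y - 1) / 4) + (x - 1) / 4 + (y - 1) / 4)"
      by (rule E2_all[OF True])
    also have "4 * ((x - 1) / 4) * ((y - 1) / 4) + (x - 1) / 4 + (y - 1) / 4 = (x * y - 1) / 4"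
      by (simp add: field_simps)
    finally show ?thesis unfolding rhoB_def using True by simp
  next
    case False
    have "ga_mult n (rhoB n x) (rhoB n y) \<sigma> = 0"
      unfolding ga_mult_def using False sp_comp by (intro sum.neutral ballI) auto
    then show ?thesis unfolding rhoB_def using False by simp
  qed
qed

end
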